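(* Let $R$ be an execution of the algorithm described in the context that starts from a well-initialized system state and includes a complete invocation of binary consensus. Suppose there is a system state $c\in R$ in which $\mathsf{result}_i()=v\in\{0,1\}$ for a correct processor $p_i$. Then there is a correct processor $p_j$ and a step of $R$ between $R$'s starting state and $c$ in which $p_j$ invokes $\mathsf{propose}_j(v)$.
   Context: System model. There are $n$ processors $p_1,\dots,p_n$ with unique identifiers, at most $t$ of which are Byzantine, where $n\ge 3t+1$; $\mathit{Correct}$ denotes the set of indices of non-faulty processors. A Byzantine processor computes its state according to the algorithm, but an adversary may arbitrarily modify, delay or remove the messages it sends. Processors cannot impersonate others, and messages between correct processors are private and cannot be altered. The system is asynchronous message passing. Every pair of processors is joined by a bidirectional channel of bounded capacity that may lose, duplicate and reorder packets, but a message sent infinitely often is received infinitely often. The scheduling of message arrivals does not depend on coin values. A common coin provides $\mathrm{randomBit}(r)$ for $r\in\mathbb{Z}^+$: all correct processors obtain the same bit $b_r$, with $\Pr(b_r=0)=\Pr(b_r=1)=1/2$, and the $b_r$ are independent. $M\in\mathbb{Z}^+$ is a fixed constant. The algorithm (code of $p_i$; $x_i$ denotes $p_i$'s copy of variable $x$). Local state: an integer $r\in\{0,\dots,M\}$; an array $est[0..M{+}1][1..n]$ whose entries are subsets of $\{0,1\}$; and an array $aux[0..M{+}1][1..n]$ whose entries lie in $\{0,1,\bot\}$. $\mathit{initState}$ means $r=0$, every $est$ entry equal to $\emptyset$, and every $aux$ entry equal to $\bot$. Let $\mathit{binValues}(r,x)=\{y\in\{0,1\}: |\{j: y\in est[r][j]\}|\ge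 x\}$. $\mathsf{infoResult}()$ is defined as follows: if there is a set $S$ of processors with $|S|\ge n-t$ and $aux[r][j]\in \mathit{binValues}(r,2t{+}1)$ for all $p_j\in S$, it returns $\{aux[r][j]:p_j\in S\}$ for such an $S$; otherwise it returns $\emptyset$. - $\mathsf{propose}(v)$, $v\in\{0,1\}$: set $(r,est,aux)\gets\mathit{initState}$, then $est[0][i]\gets\{v\}$. - $\mathsf{result}()$: if $est[M{+}1][i]$ is a singleton $\{v\}$, return $v$; else if $r\ge M$ and $\mathsf{infoResult}()\ne\emptyset$, return the error symbol $\boxtimes$; else return $\bot$. - $\mathsf{decide}(x)$: for every $r'\in\{r,\dots,M{+}1\}$ with $est[r'][i]=\emptyset$ or $aux[r'][i]=\bot$, set $est[r'][i]\gets\{x\}$ and $aux[r'][i]\gets x$. - $\mathsf{tryToDecide}(values)$: if $values$ is not a singleton, set $est[r][i]\gets\{\mathrm{randomBit}(r)\}$. Otherwise $values=\{v\}$: set $est[r][i]\gets\{v\}$, and if $v=\mathrm{randomBit}(r)$, call $\mathsf{decide}(v)$. - Do-forever loop. Each iteration does the following, provided $(r,est,aux)\ne\mathit{initState}$: (1) if $est[0][i]$ contains two values, replace it by $\{w\}$ for some $w\in est[0][i]$; (2) for every $r'\in\{1,\dots,r-1\}$ with $est[r'][i]=\emptyset$ or $aux[r'][i]=\bot$, set $est[r'][i]\gets est[0][i]$ and $aux[r'][i]\gets x$ for some $x\in est[0][i]$; (3) set $r\gets\min\{r+1,M\}$; (4) repeat { if some $w\in\mathit{binValues}(r,2t{+}1)$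 exists and ($aux[r][i]=\bot$ or $aux[r][i]\notin\mathit{binValues}(r,2t{+}1)$), set $aux[r][i]\gets w$; send $\mathrm{EST}(\mathsf{True},r,est[r{-}1][i]\cup\mathit{binValues}(r,t{+}1),aux[r][i])$ to every processor } until $\mathsf{infoResult}()\ne\emptyset$; (5) call $\mathsf{tryToDecide}(\mathsf{infoResult}())$. - Upon arrival of $\mathrm{EST}(a,\rho,V,u)$ from $p_j$: set $est[\rho][j]\gets est[\rho][j]\cup V$ and $aux[\rho][j]\gets u$; if $a=\mathsf{True}$, send $\mathrm{EST}(\mathsf{False},\rho,est[\rho{-}1][i],aux[r][i])$ to $p_j$. Definitions. - A system state is well-initialized if every correct processor has $(r_i,est_i,aux_i)=\mathit{initState}$ and no channel between two correct processors contains $\mathrm{EST}$ messages. - An execution includes a complete invocation of binary consensus if every correct processor invokes $\mathsf{propose}_i()$ exactly once in it. *)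

theory Defs
  imports Main
begin

(* Processors are indexed by 1..n; binary values {0,1} are represented by bool
   (0 = False, 1 = True); the bottom value of aux is None. Rounds/array indices
   are nat; only indices 0..M+1 are ever modified. *)

datatype pcval = AtLoopHead | InRepeat

record lstate =
  rnd :: nat
  est :: "nat \<Rightarrow> nat \<Rightarrow> bool set"
  aux :: "nat \<Rightarrow> nat \<Rightarrow> bool option"
  pc  :: pcval

datatype msg = EST bool nat "bool set" "bool option"

datatype resval = Val bool | ErrSym | BotRes

datatype label = Propose nat bool | Internal

record sysstate =
  loc  :: "nat \<Rightarrow> lstate"
  chan :: "nat \<Rightarrow> nat \<Rightarrow> msg set"   (* chan j k : packets in transit from p_j to p_k *)

definition isInitState :: "lstate \<Rightarrow> bool" where
  "isInitState s \<longleftrightarrow> rnd s = 0 \<and> est s = (\<lambda>_ _. {}) \<and> aux s = (\<lambda>_ _. None)"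

definition binValues :: "nat \<Rightarrow> lstate \<Rightarrow> nat \<Rightarrow> nat \<Rightarrow> bool set" where
  "binValues n s \<rho> x = {y. x \<le> card {j \<in> {1..n}. y \<in> est s \<rho> j}}"

definition infoSet :: "nat \<Rightarrow> nat \<Rightarrow> lstate \<Rightarrow> nat set \<Rightarrow> bool" where
  "infoSet n t s S \<longleftrightarrow> S \<subseteq> {1..n} \<and> n - t \<le> card S \<and>
     (\<forall>j\<in>S. \<exists>y. aux s (rnd s) j = Some y \<and> y \<in> binValues n s (rnd s) (2*t+1))"

(* infoResult() is nondeterministic (choice of S): relation between state and returned set *)
definition infoResult :: "nat \<Rightarrow> nat \<Rightarrow> lstate \<Rightarrow> bool set \<Rightarrow> bool" where
  "infoResult n t s V \<longleftrightarrow>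
     (\<exists>S. infoSet n t s S \<and> V = {y. \<exists>j\<in>S. aux s (rnd s) j = Some y})
     \<or> ((\<nexists>S. infoSet n t s S) \<and> V = {})"

definition result :: "nat \<Rightarrow> nat \<Rightarrow> nat \<Rightarrow> nat \<Rightarrow> lstate \<Rightarrow> resval" where
  "result n t M i s =
    (if \<exists>v. est s (M+1) i = {v} then Val (THE v. est s (M+1) i = {v})
     else if M \<le> rnd s \<and> (\<exists>V. infoResult n t s V \<and> V \<noteq> {}) then ErrSym
     else BotRes)"

definition setEst :: "nat \<Rightarrow> nat \<Rightarrow> bool set \<Rightarrow> lstate \<Rightarrow> lstate" where
  "setEst r j V s = s\<lparr>est := (est s)(r := (est s r)(j := V))\<rparr>"

definition setAux :: "nat \<Rightarrow> nat \<Rightarrow> bool option \<Rightarrow> lstate \<Rightarrow> lstate" where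
  "setAux r j u s = s\<lparr>aux := (aux s)(r := (aux s r)(j := u))\<rparr>"

definition proposeState :: "nat \<Rightarrow> bool \<Rightarrow> lstate" where
  "proposeState i v = \<lparr>rnd = 0, est = (\<lambda>_ _. {})(0 := (\<lambda>_. {})(i := {v})),
                        aux = (\<lambda>_ _. None), pc = AtLoopHead\<rparr>"

definition decide :: "nat \<Rightarrow> nat \<Rightarrow> bool \<Rightarrow> lstate \<Rightarrow> lstate" where
  "decide M i x s = (let upd = (\<lambda>r'. rnd s \<le> r' \<and> r' \<le> M+1 \<and> (est s r' i = {} \<or> aux s r' i = None)) in
     s\<lparr>est := (\<lambda>r' j. if j = i \<and> upd r' then {x} else est s r' j),
       aux := (\<lambda>r' j. if j = i \<and> upd r' then Some x else aux s r' j)\<rparr>)"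

(* coin r = randomBit(r) *)
definition tryToDecide :: "nat \<Rightarrow> (nat \<Rightarrow> bool) \<Rightarrow> nat \<Rightarrow> bool set \<Rightarrow> lstate \<Rightarrow> lstate" where
  "tryToDecide M coin i V s =
    (if \<not> (\<exists>v. V = {v}) then setEst (rnd s) i {coin (rnd s)} s
     else (let v = (THE v. V = {v}); s1 = setEst (rnd s) i {v} s in
           if v = coin (rnd s) then decide M i v s1 else s1))"

(* lines (1)-(3) of a do-forever iteration, then entering the repeat loop (4) *)
definition loopIter :: "nat \<Rightarrow> nat \<Rightarrow> lstate \<Rightarrow> lstate \<Rightarrow> bool" where
  "loopIter M i s s' \<longleftrightarrow> (\<exists>w xs.
     let e0 = (if est s 0 i = {False, True} then {w} else est s 0 i);
         s1 = setEst 0 i e0 s;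
         needs = (\<lambda>r'. 1 \<le> r' \<and> r' < rnd s1 \<and> (est s1 r' i = {} \<or> aux s1 r' i = None))
     in (\<forall>r'. e0 \<noteq> {} \<longrightarrow> xs r' \<in> e0) \<and>
        s' = s1\<lparr>est := (\<lambda>r' j. if j = i \<and> needs r' then e0 else est s1 r' j),
                aux := (\<lambda>r' j. if j = i \<and> needs r' then Some (xs r') else aux s1 r' j),
                rnd := min (rnd s1 + 1) M, pc := InRepeat\<rparr>)"

(* one iteration of the repeat body (4), followed by the until-test; on exit line (5) *)
definition repIter :: "nat \<Rightarrow> nat \<Rightarrow> nat \<Rightarrow> (nat \<Rightarrow> bool) \<Rightarrow> nat \<Rightarrow> lstate \<Rightarrow> lstate
                        \<Rightarrow> (nat \<times> msg) set \<Rightarrow> bool" where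
  "repIter n t M coin i s s' out \<longleftrightarrow> (\<exists>s1 V.
     (let r = rnd s; B = binValues n s r (2*t+1) in
       (if B \<noteq> {} \<and> (aux s r i = None \<or> (\<exists>y. aux s r i = Some y \<and> y \<notin> B))
        then (\<exists>w\<in>B. s1 = setAux r i (Some w) s) else s1 = s))
     \<and> out = {(k, EST True (rnd s1) (est s1 (rnd s1 - 1) i \<union> binValues n s1 (rnd s1) (t+1))
                        (aux s1 (rnd s1) i)) | k. k \<in> {1..n}}
     \<and> infoResult n t s1 V
     \<and> s' = (if V = {} then s1 else (tryToDecide M coin i V s1)\<lparr>pc := AtLoopHead\<rparr>))"

definition recvUpdate :: "nat \<Rightarrow> nat \<Rightarrow> nat \<Rightarrow> msg \<Rightarrow> lstate \<Rightarrow> lstate \<times> (nat \<times> msg) set" where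
  "recvUpdate M i j m s = (case m of EST a \<rho> V u \<Rightarrow>
     if 1 \<le> \<rho> \<and> \<rho> \<le> M+1 then
       (let s1 = setAux \<rho> j u (setEst \<rho> j (est s \<rho> j \<union> V) s) in
        (s1, if a then {(j, EST False \<rho> (est s1 (\<rho>-1) i) (aux s1 (rnd s1) i))} else {}))
     else (s, {}))"

(* p_i sends the messages in out over bounded-capacity (cap) lossy channels *)
definition sendTo :: "nat \<Rightarrow> nat \<Rightarrow> (nat \<times> msg) set \<Rightarrow> (nat \<Rightarrow> nat \<Rightarrow> msg set)
                      \<Rightarrow> (nat \<Rightarrow> nat \<Rightarrow> msg set) \<Rightarrow> bool" where
  "sendTo cap i out ch ch' \<longleftrightarrow>
    (\<forall>j k. j \<noteq> i \<longrightarrow> ch' j k = ch j k) \<and>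
    (\<forall>k. ch' i k \<subseteq> ch i k \<union> {m. (k, m) \<in> out} \<and> finite (ch' i k) \<and> card (ch' i k) \<le> cap)"

definition sstep :: "nat \<Rightarrow> nat \<Rightarrow> nat \<Rightarrow> nat \<Rightarrow> nat set \<Rightarrow> (nat \<Rightarrow> bool)
                     \<Rightarrow> sysstate \<Rightarrow> label \<Rightarrow> sysstate \<Rightarrow> bool" where
  "sstep n t M cap Correct coin \<sigma> l \<sigma>' \<longleftrightarrow>
   (\<exists>i v. i \<in> Correct \<and> l = Propose i v \<and> \<sigma>' = \<sigma>\<lparr>loc := (loc \<sigma>)(i := proposeState i v)\<rparr>)
 \<or> (l = Internal \<and> (
     (\<exists>i s'. i \<in> Correct \<and> pc (loc \<sigma> i) = AtLoopHead \<and> \<not> isInitState (loc \<sigma> i)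
         \<and> loopIter M i (loc \<sigma> i) s' \<and> \<sigma>' = \<sigma>\<lparr>loc := (loc \<sigma>)(i := s')\<rparr>)
   \<or> (\<exists>i s' out ch'. i \<in> Correct \<and> pc (loc \<sigma> i) = InRepeat \<and> \<not> isInitState (loc \<sigma> i)
         \<and> repIter n t M coin i (loc \<sigma> i) s' out \<and> sendTo cap i out (chan \<sigma>) ch'
         \<and> \<sigma>' = \<sigma>\<lparr>loc := (loc \<sigma>)(i := s'), chan := ch'\<rparr>)
   \<or> (\<exists>i j m ch1 ch'. i \<in> Correct \<and> j \<in> {1..n} \<and> m \<in> chan \<sigma> j i
         \<and> (ch1 = chan \<sigma> \<or> ch1 = (chan \<sigma>)(j := (chan \<sigma> j)(i := chan \<sigma> j i - {m})))
         \<and> sendTo cap i (snd (recvUpdate M i j m (loc \<sigma> i))) ch1 ch'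
         \<and> \<sigma>' = \<sigma>\<lparr>loc := (loc \<sigma>)(i := fst (recvUpdate M i j m (loc \<sigma> i))), chan := ch'\<rparr>)
   \<or> (\<exists>j k m ch'. j \<in> {1..n} - Correct \<and> k \<in> {1..n}
         \<and> ch' \<subseteq> insert m (chan \<sigma> j k) \<and> finite ch' \<and> card ch' \<le> cap
         \<and> \<sigma>' = \<sigma>\<lparr>chan := (chan \<sigma>)(j := (chan \<sigma> j)(k := ch'))\<rparr>)
   \<or> (\<exists>j k ch'. ch' \<subseteq> chan \<sigma> j k \<and> \<sigma>' = \<sigma>\<lparr>chan := (chan \<sigma>)(j := (chan \<sigma> j)(k := ch'))\<rparr>)
   \<or> \<sigma>' = \<sigma>))"

definition execution :: "nat \<Rightarrow> nat \<Rightarrow> nat \<Rightarrow> nat \<Rightarrow> nat set \<Rightarrow> (nat \<Rightarrow> bool)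
                         \<Rightarrow> (nat \<Rightarrow> sysstate) \<Rightarrow> (nat \<Rightarrow> label) \<Rightarrow> bool" where
  "execution n t M cap Correct coin R lab \<longleftrightarrow>
     (\<forall>k. sstep n t M cap Correct coin (R k) (lab k) (R (Suc k)))"

definition wellInitialized :: "nat set \<Rightarrow> sysstate \<Rightarrow> bool" where
  "wellInitialized Correct \<sigma> \<longleftrightarrow>
     (\<forall>i\<in>Correct. isInitState (loc \<sigma> i) \<and> pc (loc \<sigma> i) = AtLoopHead) \<and>
     (\<forall>i\<in>Correct. \<forall>k\<in>Correct. chan \<sigma> i k = {})"

definition completeInvocation :: "nat set \<Rightarrow> (nat \<Rightarrow> label) \<Rightarrow> bool" where
  "completeInvocation Correct lab \<longleftrightarrow> (\<forall>i\<in>Correct. \<exists>!k. \<exists>v. lab k = Propose i v)"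

end

theory Submission
  imports Defs
begin

definition goodOpt :: "bool set \<Rightarrow> bool option \<Rightarrow> bool" where
  "goodOpt P u \<longleftrightarrow> (\<forall>y. u = Some y \<longrightarrow> y \<in> P)"

definition goodMsg :: "bool set \<Rightarrow> msg \<Rightarrow> bool" where
  "goodMsg P m \<longleftrightarrow> (case m of EST a \<rho> V u \<Rightarrow> V \<subseteq> P \<and> goodOpt P u)"

definition locInv :: "nat set \<Rightarrow> nat \<Rightarrow> bool set \<Rightarrow> nat \<Rightarrow> lstate \<Rightarrow> bool" where
  "locInv Correct M P i s \<longleftrightarrow> rnd s \<le> M \<and> (\<forall>j\<in>Correct. \<forall>r. est s r j \<subseteq> P) \<and>
     (\<forall>j\<in>Correct. \<forall>r. (j \<noteq> i \<or> rnd s \<le> r) \<longrightarrow> goodOpt P (aux s r j))"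

definition chanInv :: "nat set \<Rightarrow> bool set \<Rightarrow> (nat \<Rightarrow> nat \<Rightarrow> msg set) \<Rightarrow> bool" where
  "chanInv Correct P ch \<longleftrightarrow> (\<forall>j\<in>Correct. \<forall>k\<in>Correct. \<forall>m\<in>ch j k. goodMsg P m)"

definition sysInv :: "nat set \<Rightarrow> nat \<Rightarrow> bool set \<Rightarrow> sysstate \<Rightarrow> bool" where
  "sysInv Correct M P \<sigma> \<longleftrightarrow> (\<forall>i\<in>Correct. locInv Correct M P i (loc \<sigma> i)) \<and> chanInv Correct P (chan \<sigma>)"

lemma locInv_est: "locInv Correct M P i s \<Longrightarrow> j \<in> Correct \<Longrightarrow> est s r j \<subseteq> P"
  unfolding locInv_def by simp

lemma locInv_aux: "locInv Correct M P i s \<Longrightarrow> j \<in> Correct \<Longrightarrow> j \<noteq> i \<or> rnd s \<le> r \<Longrightarrow> goodOpt P (aux s r j)"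
  unfolding locInv_def by simp

lemma locInv_rnd: "locInv Correct M P i s \<Longrightarrow> rnd s \<le> M"
  unfolding locInv_def by simp

lemma bin_sub:
  assumes "locInv Correct M P i s" "Correct \<subseteq> {1..n}" "card ({1..n} - Correct) \<le> t" "t + 1 \<le> x"
  shows "binValues n s r x \<subseteq> P"
proof
  fix y assume "y \<in> binValues n s r x"
  then have c: "x \<le> card {j \<in> {1..n}. y \<in> est s r j}" by (simp add: binValues_def)
  show "y \<in> P"
  proof (rule ccontr)
    assume "y \<notin> P"
    then have "{j \<in> {1..n}. y \<in> est s r j} \<subseteq> {1..n} - Correct"
      using locInv_est[OF assms(1)] by blast
    then have "card {j \<in> {1..n}. y \<in> est s r j} \<le> card ({1..n} - Correct)"
      by (intro card_mono) auto
    then show False using c assms(3,4) by linarith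
  qed
qed

lemma goodOpt_mono: "goodOpt P u \<Longrightarrow> P \<subseteq> P' \<Longrightarrow> goodOpt P' u"
  unfolding goodOpt_def by blast

lemma goodMsg_mono: "goodMsg P m \<Longrightarrow> P \<subseteq> P' \<Longrightarrow> goodMsg P' m"
  by (cases m) (simp add: goodMsg_def, meson goodOpt_mono subset_trans)

lemma locInv_mono:
  assumes "locInv Correct M P i s" "P \<subseteq> P'"
  shows "locInv Correct M P' i s"
  unfolding locInv_def
proof (intro conjI ballI allI impI)
  show "rnd s \<le> M" using locInv_rnd[OF assms(1)] .
next
  fix j r assume "j \<in> Correct"
  then show "est s r j \<subseteq> P'" using locInv_est[OF assms(1)] assms(2) by (meson subset_trans)
next
  fix j r assume "j \<in> Correct" "j \<noteq> i \<or> rnd s \<le> r"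
  then show "goodOpt P' (aux s r j)" using locInv_aux[OF assms(1)] goodOpt_mono assms(2) by blast
qed

lemma chanInv_mono:
  assumes "chanInv Correct P ch" "P \<subseteq> P'"
  shows "chanInv Correct P' ch"
  unfolding chanInv_def
proof (intro ballI)
  fix j k m assume "j \<in> Correct" "k \<in> Correct" "m \<in> ch j k"
  then have "goodMsg P m" using assms(1) unfolding chanInv_def by blast
  then show "goodMsg P' m" using goodMsg_mono assms(2) by blast
qed

lemma loop_ok:
  assumes "locInv Correct M P i s" "i \<in> Correct" "loopIter M i s s'"
  shows "locInv Correct M P i s'"
proof -
  define E0 where "E0 = (\<lambda>w. if est s 0 i = {False, True} then {w} else est s 0 i)"
  define S1 where "S1 = (\<lambda>w. setEst 0 i (E0 w) s)"
  define NEEDS where "NEEDS = (\<lambda>w r'. 1 \<le> r' \<and> r' < rnd (S1 w) \<and> (est (S1 w) r' i = {} \<or> aux (S1 w) r' i = None))"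
  have "loopIter M i s s' = (\<exists>w xs. (\<forall>r'. E0 w \<noteq> {} \<longrightarrow> xs r' \<in> E0 w) \<and>
        s' = (S1 w)\<lparr>est := (\<lambda>r' j. if j = i \<and> NEEDS w r' then E0 w else est (S1 w) r' j),
                aux := (\<lambda>r' j. if j = i \<and> NEEDS w r' then Some (xs r') else aux (S1 w) r' j),
                rnd := min (rnd (S1 w) + 1) M, pc := InRepeat\<rparr>)"
    unfolding loopIter_def Let_def E0_def S1_def NEEDS_def by (rule refl)
  then have ex: "\<exists>w xs. (\<forall>r'. E0 w \<noteq> {} \<longrightarrow> xs r' \<in> E0 w) \<and>
        s' = (S1 w)\<lparr>est := (\<lambda>r' j. if j = i \<and> NEEDS w r' then E0 w else est (S1 w) r' j),
                aux := (\<lambda>r' j. if j = i \<and> NEEDS w r' then Some (xs r') else aux (S1 w) r' j),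
                rnd := min (rnd (S1 w) + 1) M, pc := InRepeat\<rparr>" using assms(3) by (rule iffD1)
  obtain w xs where s'0: "s' = (S1 w)\<lparr>est := (\<lambda>r' j. if j = i \<and> NEEDS w r' then E0 w else est (S1 w) r' j),
                aux := (\<lambda>r' j. if j = i \<and> NEEDS w r' then Some (xs r') else aux (S1 w) r' j),
                rnd := min (rnd (S1 w) + 1) M, pc := InRepeat\<rparr>"
    using ex apply - apply (elim exE conjE) apply (rule that) apply assumption done
  define e0 where "e0 = E0 w"
  define s1 where "s1 = S1 w"
  define needs where "needs = NEEDS w"
  have s': "s' = s1\<lparr>est := (\<lambda>r' j. if j = i \<and> needs r' then e0 else est s1 r' j),
                aux := (\<lambda>r' j. if j = i \<and> needs r' then Some (xs r') else aux s1 r' j),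
                rnd := min (rnd s1 + 1) M, pc := InRepeat\<rparr>"
    using s'0 unfolding e0_def s1_def needs_def .
  have s1_def: "s1 = setEst 0 i e0 s" by (simp add: s1_def S1_def e0_def)
  have needs_def: "needs = (\<lambda>r'. 1 \<le> r' \<and> r' < rnd s1 \<and> (est s1 r' i = {} \<or> aux s1 r' i = None))"
    by (simp add: needs_def NEEDS_def s1_def S1_def e0_def)
  have e0_def: "e0 = (if est s 0 i = {False, True} then {w} else est s 0 i)" by (simp add: e0_def E0_def)
  have "est s 0 i \<subseteq> P" using locInv_est[OF assms(1,2)] .
  then have e0P: "e0 \<subseteq> P"
  proof (cases "est s 0 i = {False, True}")
    case True
    with \<open>est s 0 i \<subseteq> P\<close> have "w \<in> P" by (cases w) auto
    then show ?thesis using True unfolding e0_def by simp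
  next
    case False
    then show ?thesis using \<open>est s 0 i \<subseteq> P\<close> unfolding e0_def by simp
  qed
  have r1: "rnd s1 = rnd s" "aux s1 = aux s" by (simp_all add: s1_def setEst_def)
  have e1: "\<forall>j\<in>Correct. \<forall>r. est s1 r j \<subseteq> P" using locInv_est[OF assms(1)] e0P unfolding s1_def setEst_def by auto
  have rs: "rnd s \<le> M" using locInv_rnd[OF assms(1)] .
  show ?thesis
    unfolding locInv_def
  proof (intro conjI ballI allI impI)
    show "rnd s' \<le> M" by (simp add: s')
  next
    fix j r assume "j \<in> Correct" then show "est s' r j \<subseteq> P" using e1 e0P by (simp add: s')
  next
    fix j r assume j: "j \<in> Correct" and h: "j \<noteq> i \<or> rnd s' \<le> r"
    show "goodOpt P (aux s' r j)"
    proof (cases "j = i \<and> needs r")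
      case True
      then have "r < rnd s" using r1 by (simp add: needs_def)
      moreover have "rnd s' \<ge> rnd s" using rs r1 by (simp add: s')
      ultimately show ?thesis using h True by auto
    next
      case False
      then have "aux s' r j = aux s r j" using r1 by (auto simp: s')
      moreover have "j \<noteq> i \<or> rnd s \<le> r" using h rs r1 by (auto simp: s')
      ultimately show ?thesis using locInv_aux[OF assms(1) j] by simp
    qed
  qed
qed

lemma locInv_pc[simp]: "locInv Correct M P i (s\<lparr>pc := x\<rparr>) = locInv Correct M P i s"
  unfolding locInv_def by simp

lemma setEst_ok:
  assumes "locInv Correct M P i s" "j \<in> Correct \<longrightarrow> V \<subseteq> P"
  shows "locInv Correct M P i (setEst r j V s)"
  using assms unfolding locInv_def setEst_def by auto

lemma setAux_ok:
  assumes "locInv Correct M P i s" "j \<in> Correct \<longrightarrow> goodOpt P u"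
  shows "locInv Correct M P i (setAux r j u s)"
  using assms unfolding locInv_def setAux_def by auto

lemma decide_ok:
  assumes "locInv Correct M P i s" "x \<in> P"
  shows "locInv Correct M P i (decide M i x s)"
  using assms unfolding locInv_def decide_def Let_def goodOpt_def by auto

lemma twoP:
  assumes "V \<subseteq> P" "V \<noteq> {}" "\<not> (\<exists>v. V = {v})"
  shows "(b::bool) \<in> P"
proof (rule ccontr)
  assume "b \<notin> P"
  then have "b \<notin> V" using assms(1) by blast
  have "V \<subseteq> {\<not> b}"
  proof
    fix x assume "x \<in> V"
    then have "x \<noteq> b" using \<open>b \<notin> V\<close> by blast
    then show "x \<in> {\<not> b}" by (cases x; cases b) auto
  qed
  then have "V = {\<not> b}" using assms(2) by blast
  then show False using assms(3) by blast
qed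

lemma tryToDecide_ok:
  assumes "locInv Correct M P i s" "V \<subseteq> P" "V \<noteq> {}"
  shows "locInv Correct M P i (tryToDecide M coin i V s)"
proof (cases "\<exists>v. V = {v}")
  case False
  then have "coin (rnd s) \<in> P" using twoP[OF assms(2,3)] by blast
  then show ?thesis using False setEst_ok[OF assms(1)] unfolding tryToDecide_def by simp
next
  case True
  then obtain v where V: "V = {v}" by blast
  then have vP: "v \<in> P" using assms(2) by simp
  have s1: "locInv Correct M P i (setEst (rnd s) i {v} s)" using setEst_ok[OF assms(1)] vP by simp
  have th: "(THE v'. V = {v'}) = v" using V by simp
  show ?thesis
  proof (cases "v = coin (rnd s)")
    case True
    then have "tryToDecide M coin i V s = decide M i v (setEst (rnd s) i {v} s)"
      using V th unfolding tryToDecide_def Let_def by simp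
    then show ?thesis using decide_ok[OF s1 vP] by simp
  next
    case False
    then have "tryToDecide M coin i V s = setEst (rnd s) i {v} s"
      using V th unfolding tryToDecide_def Let_def by simp
    then show ?thesis using s1 by simp
  qed
qed

lemma infoResult_sub:
  assumes "locInv Correct M P i s" "Correct \<subseteq> {1..n}" "card ({1..n} - Correct) \<le> t"
    "infoResult n t s V"
  shows "V \<subseteq> P"
proof -
  have B: "binValues n s (rnd s) (2*t+1) \<subseteq> P" using bin_sub[OF assms(1,2,3)] by simp
  show ?thesis using assms(4) B unfolding infoResult_def infoSet_def by fastforce
qed

lemma repIter_D:
  assumes "repIter n t M coin i s s' out"
  shows "\<exists>s1 V. (s1 = s \<or> (\<exists>w\<in>binValues n s (rnd s) (2*t+1). s1 = setAux (rnd s) i (Some w) s))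
     \<and> out = {(k, EST True (rnd s1) (est s1 (rnd s1 - 1) i \<union> binValues n s1 (rnd s1) (t+1))
                        (aux s1 (rnd s1) i)) | k. k \<in> {1..n}}
     \<and> infoResult n t s1 V
     \<and> s' = (if V = {} then s1 else (tryToDecide M coin i V s1)\<lparr>pc := AtLoopHead\<rparr>)"
  using assms unfolding repIter_def Let_def
  apply (elim exE conjE)
  subgoal for s1 V
    apply (rule exI[of _ s1], rule exI[of _ V])
    apply (intro conjI)
       apply (simp split: if_split_asm)
      apply assumption+
    done
  done

lemma rep_ok:
  assumes "locInv Correct M P i s" "i \<in> Correct" "Correct \<subseteq> {1..n}" "card ({1..n} - Correct) \<le> t"
    "repIter n t M coin i s s' out"
  shows "locInv Correct M P i s' \<and> (\<forall>km\<in>out. goodMsg P (snd km))"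
proof -
  obtain s1 V where h1: "s1 = s \<or> (\<exists>w\<in>binValues n s (rnd s) (2*t+1). s1 = setAux (rnd s) i (Some w) s)"
    and out: "out = {(k, EST True (rnd s1) (est s1 (rnd s1 - 1) i \<union> binValues n s1 (rnd s1) (t+1))
                        (aux s1 (rnd s1) i)) | k. k \<in> {1..n}}"
    and iR: "infoResult n t s1 V"
    and s': "s' = (if V = {} then s1 else (tryToDecide M coin i V s1)\<lparr>pc := AtLoopHead\<rparr>)"
    using repIter_D[OF assms(5)] by blast
  have B: "binValues n s (rnd s) (2*t+1) \<subseteq> P" using bin_sub[OF assms(1,3,4)] by simp
  have L1: "locInv Correct M P i s1"
    using h1
  proof
    assume "s1 = s" then show ?thesis using assms(1) by simp
  next
    assume "\<exists>w\<in>binValues n s (rnd s) (2*t+1). s1 = setAux (rnd s) i (Some w) s"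
    then obtain w where "w \<in> P" "s1 = setAux (rnd s) i (Some w) s" using B by blast
    then show ?thesis using setAux_ok[OF assms(1)] by (simp add: goodOpt_def)
  qed
  have VP: "V \<subseteq> P" using infoResult_sub[OF L1 assms(3,4) iR] .
  have "locInv Correct M P i s'"
    using L1 tryToDecide_ok[OF L1 VP] s' by simp
  moreover have "\<forall>km\<in>out. goodMsg P (snd km)"
  proof -
    have "est s1 (rnd s1 - 1) i \<subseteq> P" using locInv_est[OF L1 assms(2)] .
    moreover have "binValues n s1 (rnd s1) (t+1) \<subseteq> P" using bin_sub[OF L1 assms(3,4)] by simp
    moreover have "goodOpt P (aux s1 (rnd s1) i)" using locInv_aux[OF L1 assms(2)] by simp
    ultimately show ?thesis unfolding out goodMsg_def by auto
  qed
  ultimately show ?thesis by blast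
qed

lemma recv_ok:
  assumes "locInv Correct M P i s" "i \<in> Correct" "j \<in> Correct \<longrightarrow> goodMsg P m"
  shows "locInv Correct M P i (fst (recvUpdate M i j m s)) \<and> (\<forall>km\<in>snd (recvUpdate M i j m s). goodMsg P (snd km))"
proof (cases m)
  case (EST a \<rho> V u)
  show ?thesis
  proof (cases "1 \<le> \<rho> \<and> \<rho> \<le> M+1")
    case False
    then have "recvUpdate M i j m s = (s, {})" by (auto simp: recvUpdate_def EST)
    then show ?thesis using assms(1) by simp
  next
    case True
    define s1 where "s1 = setAux \<rho> j u (setEst \<rho> j (est s \<rho> j \<union> V) s)"
    have g: "j \<in> Correct \<longrightarrow> V \<subseteq> P \<and> goodOpt P u" using assms(3) EST by (simp add: goodMsg_def)
    have "j \<in> Correct \<longrightarrow> est s \<rho> j \<union> V \<subseteq> P" using g locInv_est[OF assms(1)] by blast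
    then have L0: "locInv Correct M P i (setEst \<rho> j (est s \<rho> j \<union> V) s)" by (rule setEst_ok[OF assms(1)])
    have L1: "locInv Correct M P i s1" unfolding s1_def using setAux_ok[OF L0] g by blast
    have "est s1 (\<rho>-1) i \<subseteq> P" using locInv_est[OF L1 assms(2)] .
    moreover have "goodOpt P (aux s1 (rnd s1) i)" using locInv_aux[OF L1 assms(2)] by simp
    moreover have "recvUpdate M i j m s = (s1, if a then {(j, EST False \<rho> (est s1 (\<rho>-1) i) (aux s1 (rnd s1) i))} else {})"
      using True EST unfolding recvUpdate_def s1_def Let_def by simp
    ultimately show ?thesis using L1 by (simp add: goodMsg_def)
  qed
qed

lemma send_ok:
  assumes "chanInv Correct P ch" "\<forall>km\<in>out. goodMsg P (snd km)" "sendTo cap i out ch ch'"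
  shows "chanInv Correct P ch'"
  unfolding chanInv_def
proof (intro ballI)
  fix j k m assume j: "j \<in> Correct" and k: "k \<in> Correct" and m: "m \<in> ch' j k"
  show "goodMsg P m"
  proof (cases "j = i")
    case False
    then have "ch' j k = ch j k" using assms(3) unfolding sendTo_def by blast
    then show ?thesis using assms(1) j k m unfolding chanInv_def by blast
  next
    case True
    then have "m \<in> ch j k \<or> (k, m) \<in> out" using assms(3) m unfolding sendTo_def by blast
    then show ?thesis using assms(1,2) j k unfolding chanInv_def by fastforce
  qed
qed

lemma sysInv_mono:
  assumes "sysInv Correct M P \<sigma>" "P \<subseteq> P'"
  shows "sysInv Correct M P' \<sigma>"
proof -
  have "\<forall>i\<in>Correct. locInv Correct M P i (loc \<sigma> i)" "chanInv Correct P (chan \<sigma>)"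
    using assms(1) unfolding sysInv_def by simp_all
  then show ?thesis unfolding sysInv_def using locInv_mono[OF _ assms(2)] chanInv_mono[OF _ assms(2)] by blast
qed

lemma propose_ok: "locInv Correct M (insert v P) i (proposeState i v)"
  unfolding locInv_def proposeState_def goodOpt_def by auto

lemma step_ok:
  assumes inv: "sysInv Correct M P \<sigma>" and C: "Correct \<subseteq> {1..n}" "card ({1..n} - Correct) \<le> t"
    and st: "sstep n t M cap Correct coin \<sigma> l \<sigma>'"
  shows "sysInv Correct M (P \<union> {v. \<exists>j\<in>Correct. l = Propose j v}) \<sigma>'"
proof -
  let ?P' = "P \<union> {v. \<exists>j\<in>Correct. l = Propose j v}"
  have LI: "\<And>i. i \<in> Correct \<Longrightarrow> locInv Correct M P i (loc \<sigma> i)" and CI: "chanInv Correct P (chan \<sigma>)"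
    using inv unfolding sysInv_def by auto
  have keep: "sysInv Correct M P \<sigma>' \<Longrightarrow> sysInv Correct M ?P' \<sigma>'"
    by (erule sysInv_mono) blast
  have upd: "\<And>i s' ch'. i \<in> Correct \<Longrightarrow> locInv Correct M P i s' \<Longrightarrow> chanInv Correct P ch' \<Longrightarrow>
      sysInv Correct M P (\<sigma>\<lparr>loc := (loc \<sigma>)(i := s'), chan := ch'\<rparr>)"
    unfolding sysInv_def using LI by simp
  have recvcase: "\<And>i j m ch1 ch'. i \<in> Correct \<Longrightarrow> m \<in> chan \<sigma> j i \<Longrightarrow>
      \<forall>a b. ch1 a b \<subseteq> chan \<sigma> a b \<Longrightarrow>
      sendTo cap i (snd (recvUpdate M i j m (loc \<sigma> i))) ch1 ch' \<Longrightarrow>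
      \<sigma>' = \<sigma>\<lparr>loc := (loc \<sigma>)(i := fst (recvUpdate M i j m (loc \<sigma> i))), chan := ch'\<rparr> \<Longrightarrow> sysInv Correct M ?P' \<sigma>'"
  proof -
    fix i j m ch1 ch' assume i: "i \<in> Correct" and m: "m \<in> chan \<sigma> j i"
      and ch1: "\<forall>a b. ch1 a b \<subseteq> chan \<sigma> a b"
      and sd: "sendTo cap i (snd (recvUpdate M i j m (loc \<sigma> i))) ch1 ch'"
      and s: "\<sigma>' = \<sigma>\<lparr>loc := (loc \<sigma>)(i := fst (recvUpdate M i j m (loc \<sigma> i))), chan := ch'\<rparr>"
    have gm: "j \<in> Correct \<longrightarrow> goodMsg P m" using CI m i unfolding chanInv_def by blast
    have C1: "chanInv Correct P ch1" using CI ch1 unfolding chanInv_def by blast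
    note R = recv_ok[OF LI[OF i] i gm]
    show "sysInv Correct M ?P' \<sigma>'" using keep upd[OF i conjunct1[OF R] send_ok[OF C1 conjunct2[OF R] sd]] s by simp
  qed
  from st show ?thesis unfolding sstep_def
  proof (elim disjE exE conjE)
    fix i v assume i: "i \<in> Correct" and l: "l = Propose i v"
      and s: "\<sigma>' = \<sigma>\<lparr>loc := (loc \<sigma>)(i := proposeState i v)\<rparr>"
    have sub: "insert v P \<subseteq> ?P'" using i l by auto
    have "locInv Correct M ?P' i (proposeState i v)" using locInv_mono[OF propose_ok sub] .
    moreover have "\<And>k. k \<in> Correct \<Longrightarrow> locInv Correct M ?P' k (loc \<sigma> k)" using LI locInv_mono by blast
    moreover have "chanInv Correct ?P' (chan \<sigma>)" using CI chanInv_mono by blast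
    ultimately show ?thesis unfolding sysInv_def s by auto
  next
    fix i s' assume i: "i \<in> Correct" and lp: "loopIter M i (loc \<sigma> i) s'"
      and s: "\<sigma>' = \<sigma>\<lparr>loc := (loc \<sigma>)(i := s')\<rparr>"
    have "sysInv Correct M P (\<sigma>\<lparr>loc := (loc \<sigma>)(i := s'), chan := chan \<sigma>\<rparr>)"
      using upd[OF i loop_ok[OF LI[OF i] i lp] CI] .
    then show ?thesis using keep s by simp
  next
    fix i s' out ch' assume i: "i \<in> Correct" and rp: "repIter n t M coin i (loc \<sigma> i) s' out"
      and sd: "sendTo cap i out (chan \<sigma>) ch'"
      and s: "\<sigma>' = \<sigma>\<lparr>loc := (loc \<sigma>)(i := s'), chan := ch'\<rparr>"
    note R = rep_ok[OF LI[OF i] i C rp]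
    show ?thesis using keep upd[OF i conjunct1[OF R] send_ok[OF CI conjunct2[OF R] sd]] s by simp
  next
    fix i j m ch1 ch' assume i: "i \<in> Correct" and m: "m \<in> chan \<sigma> j i"
      and ch1: "ch1 = chan \<sigma>"
      and sd: "sendTo cap i (snd (recvUpdate M i j m (loc \<sigma> i))) ch1 ch'"
      and s: "\<sigma>' = \<sigma>\<lparr>loc := (loc \<sigma>)(i := fst (recvUpdate M i j m (loc \<sigma> i))), chan := ch'\<rparr>"
    show ?thesis by (rule recvcase[OF i m _ sd s]) (simp add: ch1)
  next
    fix i j m ch1 ch' assume i: "i \<in> Correct" and m: "m \<in> chan \<sigma> j i"
      and ch1: "ch1 = (chan \<sigma>)(j := (chan \<sigma> j)(i := chan \<sigma> j i - {m}))"
      and sd: "sendTo cap i (snd (recvUpdate M i j m (loc \<sigma> i))) ch1 ch'"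
      and s: "\<sigma>' = \<sigma>\<lparr>loc := (loc \<sigma>)(i := fst (recvUpdate M i j m (loc \<sigma> i))), chan := ch'\<rparr>"
    show ?thesis by (rule recvcase[OF i m _ sd s]) (auto simp: ch1 split: if_split_asm)
  next
    fix j k m ch' assume j: "j \<in> {1..n} - Correct"
      and s: "\<sigma>' = \<sigma>\<lparr>chan := (chan \<sigma>)(j := (chan \<sigma> j)(k := ch'))\<rparr>"
    have "sysInv Correct M P \<sigma>'" using inv j unfolding s sysInv_def chanInv_def by auto
    then show ?thesis using keep by blast
  next
    fix j k ch' assume sub: "ch' \<subseteq> chan \<sigma> j k"
      and s: "\<sigma>' = \<sigma>\<lparr>chan := (chan \<sigma>)(j := (chan \<sigma> j)(k := ch'))\<rparr>"
    have "sysInv Correct M P \<sigma>'" using inv sub unfolding s sysInv_def chanInv_def by auto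
    then show ?thesis using keep by blast
  next
    assume "\<sigma>' = \<sigma>"
    then show ?thesis using keep inv by simp
  qed
qed

theorem lemma7:
  fixes n t M cap :: nat and Correct :: "nat set" and coin :: "nat \<Rightarrow> bool"
    and R :: "nat \<Rightarrow> sysstate" and lab :: "nat \<Rightarrow> label"
    and i c :: nat and v :: bool
  assumes "n \<ge> 3 * t + 1"
    and "Correct \<subseteq> {1..n}"
    and "card ({1..n} - Correct) \<le> t"
    and "M \<ge> 1"
    and "execution n t M cap Correct coin R lab"
    and "wellInitialized Correct (R 0)"
    and "completeInvocation Correct lab"
    and "i \<in> Correct"
    and "result n t M i (loc (R c) i) = Val v"
  shows "\<exists>j\<in>Correct. \<exists>k<c. lab k = Propose j v"
proof -
  define PP where "PP = (\<lambda>k. {v. \<exists>j\<in>Correct. \<exists>k'<k. lab k' = Propose j v})"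
  have PS: "PP (Suc k) = PP k \<union> {v. \<exists>j\<in>Correct. lab k = Propose j v}" for k
    unfolding PP_def less_Suc_eq by blast
  have I: "sysInv Correct M (PP k) (R k)" for k
  proof (induction k)
    case 0
    have "PP 0 = {}" unfolding PP_def by simp
    then show ?case using assms(6)
      unfolding sysInv_def wellInitialized_def isInitState_def locInv_def chanInv_def goodOpt_def
      by auto
  next
    case (Suc k)
    have "sstep n t M cap Correct coin (R k) (lab k) (R (Suc k))"
      using assms(5) unfolding execution_def by blast
    from step_ok[OF Suc.IH assms(2,3) this] show ?case unfolding PS .
  qed
  have L: "locInv Correct M (PP c) i (loc (R c) i)" using I[of c] assms(8) unfolding sysInv_def by blast
  have "\<exists>v'. est (loc (R c) i) (M+1) i = {v'}"
  proof (rule ccontr)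
    assume "\<not> ?thesis"
    then have "result n t M i (loc (R c) i) \<noteq> Val v" unfolding result_def by auto
    then show False using assms(9) by blast
  qed
  then obtain v' where v': "est (loc (R c) i) (M+1) i = {v'}" by blast
  then have "result n t M i (loc (R c) i) = Val v'" unfolding result_def by simp
  then have "v = v'" using assms(9) by simp
  then have "v \<in> PP c" using locInv_est[OF L assms(8), of "M+1"] v' by simp
  then show ?thesis unfolding PP_def by blast
qed

end
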